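(* If a commutative ring $R$ has almost stable range 1, then $R$ is locally stable.
   Context: All rings are commutative with identity. A ring $S$ has stable range 1 if whenever $aS+bS=S$ there is $y\in S$ with $a+by$ a unit. $R$ has almost stable range 1 if every proper homomorphic image $R/I$ with $I\neq 0$ has stable range 1. $R$ is locally stable if whenever $a,b\in R$ with $aR+bR=R$ there is $y\in R$ such that $R/(a+by)R$ has stable range 1. *)

theory Defs
  imports "HOL-Algebra.QuotRing"
begin

definition comaximal :: "('a, 'b) ring_scheme \<Rightarrow> 'a \<Rightarrow> 'a \<Rightarrow> bool" where
  "comaximal S a b \<longleftrightarrow>
     (\<exists>x\<in>carrier S. \<exists>z\<in>carrier S. (a \<otimes>\<^bsub>S\<^esub> x) \<oplus>\<^bsub>S\<^esub> (b \<otimes>\<^bsub>S\<^esub> z) = \<one>\<^bsub>S\<^esub>)"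

definition stable_range_1 :: "('a, 'b) ring_scheme \<Rightarrow> bool" where
  "stable_range_1 S \<longleftrightarrow>
     (\<forall>a\<in>carrier S. \<forall>b\<in>carrier S. comaximal S a b \<longrightarrow>
        (\<exists>y\<in>carrier S. a \<oplus>\<^bsub>S\<^esub> (b \<otimes>\<^bsub>S\<^esub> y) \<in> Units S))"

definition almost_stable_range_1 :: "('a, 'b) ring_scheme \<Rightarrow> bool" where
  "almost_stable_range_1 R \<longleftrightarrow>
     (\<forall>I. ideal I R \<and> I \<noteq> {\<zero>\<^bsub>R\<^esub>} \<longrightarrow> stable_range_1 (R Quot I))"

definition locally_stable :: "('a, 'b) ring_scheme \<Rightarrow> bool" where
  "locally_stable R \<longleftrightarrow>
     (\<forall>a\<in>carrier R. \<forall>b\<in>carrier R. comaximal R a b \<longrightarrow>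
        (\<exists>y\<in>carrier R. stable_range_1 (R Quot (PIdl\<^bsub>R\<^esub> (a \<oplus>\<^bsub>R\<^esub> (b \<otimes>\<^bsub>R\<^esub> y))))))"

end

theory Submission
  imports Defs
begin

lemma (in cring) triv_quot_sr1:
  shows "stable_range_1 (R Quot (carrier R))"
proof -
  have id: "ideal (carrier R) R" by (rule oneideal)
  have rq: "ring (R Quot carrier R)" by (rule ideal.quotient_is_ring[OF id])
  have sing: "\<And>u v. u \<in> carrier (R Quot carrier R) \<Longrightarrow> v \<in> carrier (R Quot carrier R) \<Longrightarrow> u = v"
  proof -
    fix u v assume "u \<in> carrier (R Quot carrier R)" "v \<in> carrier (R Quot carrier R)"
    then obtain x z where "x \<in> carrier R" "u = carrier R +> x" "z \<in> carrier R" "v = carrier R +> z"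
      by (auto simp: FactRing_def A_RCOSETS_def')
    then show "u = v"
      using additive_subgroup.a_subset[OF ideal.axioms(1)[OF id]]
      by (metis abelian_subgroup.a_rcos_const ideal.axioms(1) id is_abelian_group
          abelian_subgroupI3 additive_subgroup_def)
  qed
  show ?thesis
    unfolding stable_range_1_def
  proof (intro ballI impI)
    fix a b assume a: "a \<in> carrier (R Quot carrier R)" and b: "b \<in> carrier (R Quot carrier R)"
    have "a \<oplus>\<^bsub>R Quot carrier R\<^esub> (b \<otimes>\<^bsub>R Quot carrier R\<^esub> \<one>\<^bsub>R Quot carrier R\<^esub>) = \<one>\<^bsub>R Quot carrier R\<^esub>"
      using sing a b ring.ring_simprules[OF rq] by metis
    then show "\<exists>y\<in>carrier (R Quot carrier R). a \<oplus>\<^bsub>R Quot carrier R\<^esub> (b \<otimes>\<^bsub>R Quot carrier R\<^esub> y) \<in> Units (R Quot carrier R)"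
      using ring.ring_simprules(6)[OF rq] monoid.Units_one_closed[OF ring.is_monoid[OF rq]] by metis
  qed
qed

lemma (in cring) main:
  assumes "almost_stable_range_1 R"
  shows "locally_stable R"
  unfolding locally_stable_def
proof (intro ballI impI)
  fix a b assume a: "a \<in> carrier R" and b: "b \<in> carrier R" and c: "comaximal R a b"
  show "\<exists>y\<in>carrier R. stable_range_1 (R Quot PIdl (a \<oplus> b \<otimes> y))"
  proof (cases "a = \<zero>")
    case False
    have "a \<oplus> b \<otimes> \<zero> = a" using a b by simp
    moreover have "ideal (PIdl a) R" using a by (rule cgenideal_ideal)
    moreover have "a \<in> PIdl a" using a by (rule cgenideal_self)
    ultimately show ?thesis using assms False unfolding almost_stable_range_1_def
      by (metis zero_closed singletonD)
  next
    case True
    then obtain x z where xz: "x \<in> carrier R" "z \<in> carrier R" "b \<otimes> z = \<one>"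
      using c a b unfolding comaximal_def by auto
    have "a \<oplus> b \<otimes> z = \<one>" using True xz b by simp
    moreover have "PIdl \<one> = carrier R"
      by (metis cgenideal_ideal cgenideal_self one_closed ideal.one_imp_carrier)
    ultimately show ?thesis using xz triv_quot_sr1 by metis
  qed
qed

theorem corollary2p2:
  fixes R :: "('a, 'b) ring_scheme"
  assumes "cring R"
    and "almost_stable_range_1 R"
  shows "locally_stable R"
  using cring.main[OF assms] .

end
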